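(* Let $E\in\mathbb{S}^n_{++}$ and $0<\alpha<\sqrt n$. Then $K_E(\alpha)^*=K_{E^{-1}}\big(\sqrt{n-\alpha^2}\big)$.
   Context: $\mathbb{S}^n$ is the space of real symmetric $n\times n$ matrices with the trace inner product, $\mathbb{S}^n_{++}$ the positive definite matrices. For $F\in\mathbb{S}^n_{++}$ and $\gamma\ge0$, $K_F(\gamma)=\{X\in\mathbb{S}^n:\mathrm{tr}(F^{-1}X)\ge\gamma\,\mathrm{tr}((F^{-1}X)^2)^{1/2}\}$. $K_E(\alpha)^*=\{S:\mathrm{tr}(XS)\ge0\ \forall X\in K_E(\alpha)\}$ is the dual cone with respect to the trace inner product. *)

theory Defs
  imports "HOL-Analysis.Analysis"
begin

definition sym_mat :: "real^'n^'n \<Rightarrow> bool" where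
  "sym_mat A \<longleftrightarrow> transpose A = A"

definition pos_def :: "real^'n^'n \<Rightarrow> bool" where
  "pos_def A \<longleftrightarrow> sym_mat A \<and> (\<forall>x. x \<noteq> 0 \<longrightarrow> x \<bullet> (A *v x) > 0)"

definition K_cone :: "real^'n^'n \<Rightarrow> real \<Rightarrow> (real^'n^'n) set" where
  "K_cone F \<gamma> = {X. sym_mat X \<and>
     trace (matrix_inv F ** X) \<ge> \<gamma> * sqrt (trace ((matrix_inv F ** X) ** (matrix_inv F ** X)))}"

definition dual_cone :: "(real^'n^'n) set \<Rightarrow> (real^'n^'n) set" where
  "dual_cone K = {S. sym_mat S \<and> (\<forall>X\<in>K. trace (X ** S) \<ge> 0)}"

end

theory Submission
  imports Defs
begin


lemma cone_dual_rl:
  fixes e z y :: "'a::real_inner"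
  assumes ne: "inner e e = n" and a0: "0<\<alpha>" and an: "\<alpha>\<^sup>2 < n"
    and hz: "sqrt(n-\<alpha>\<^sup>2) * norm z \<le> inner e z"
    and hy: "\<alpha> * norm y \<le> inner e y"
  shows "0 \<le> inner y z"
proof -
  define a where "a = inner e y"
  define b where "b = inner e z"
  define \<beta> where "\<beta> = sqrt(n-\<alpha>\<^sup>2)"
  have n0: "n > 0" using an a0 by (smt (verit) zero_less_power)
  have b2: "\<beta>\<^sup>2 = n - \<alpha>\<^sup>2" using an by (simp add: \<beta>_def)
  have bpos: "\<beta> > 0" using an by (simp add: \<beta>_def)
  have a_ge: "a \<ge> 0" using hy a0 unfolding a_def by (smt (verit) mult_nonneg_nonneg norm_ge_zero)
  have b_ge: "b \<ge> 0" using hz bpos unfolding b_def \<beta>_def by (smt (verit) mult_nonneg_nonneg norm_ge_zero)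
  define y' where "y' = y - (a/n) *\<^sub>R e"
  define z' where "z' = z - (b/n) *\<^sub>R e"
  have yz: "inner y z = inner y' z' + a*b/n"
    using n0 unfolding y'_def z'_def a_def b_def
    by (simp add: inner_diff_left inner_diff_right ne inner_commute field_simps power2_eq_square)
  have pp0: "inner y' y' = inner y y - a\<^sup>2/n"
    using n0 unfolding y'_def a_def
    by (simp add: inner_diff_left inner_diff_right ne inner_commute field_simps power2_eq_square)
  have qq0: "inner z' z' = inner z z - b\<^sup>2/n"
    using n0 unfolding z'_def b_def
    by (simp add: inner_diff_left inner_diff_right ne inner_commute field_simps power2_eq_square)
  have pp: "inner y' y' = (norm y)\<^sup>2 - a\<^sup>2/n" using pp0 by (simp add: power2_norm_eq_inner)
  have qq: "inner z' z' = (norm z)\<^sup>2 - b\<^sup>2/n" using qq0 by (simp add: power2_norm_eq_inner)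
  have ny: "(norm y)\<^sup>2 \<le> a\<^sup>2/\<alpha>\<^sup>2"
  proof -
    have "(\<alpha> * norm y)\<^sup>2 \<le> a\<^sup>2" using hy a0 unfolding a_def
      by (intro power_mono) auto
    thus ?thesis using a0 by (simp add: field_simps power_mult_distrib)
  qed
  have nz: "(norm z)\<^sup>2 \<le> b\<^sup>2/\<beta>\<^sup>2"
  proof -
    have "(\<beta> * norm z)\<^sup>2 \<le> b\<^sup>2" using hz bpos unfolding b_def \<beta>_def
      by (intro power_mono) auto
    thus ?thesis using bpos by (simp add: field_simps power_mult_distrib)
  qed
  define P0 where "P0 = a\<^sup>2*(n-\<alpha>\<^sup>2)/(\<alpha>\<^sup>2*n)"
  define Q0 where "Q0 = b\<^sup>2*\<alpha>\<^sup>2/((n-\<alpha>\<^sup>2)*n)"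
  have p_le: "inner y' y' \<le> P0"
  proof -
    have "a\<^sup>2/\<alpha>\<^sup>2 - a\<^sup>2/n = P0" using a0 n0 an unfolding P0_def by (simp add: field_simps)
    thus ?thesis using pp ny by linarith
  qed
  have q_le: "inner z' z' \<le> Q0"
  proof -
    have "b\<^sup>2/\<beta>\<^sup>2 - b\<^sup>2/n = Q0" unfolding b2 using a0 n0 an unfolding Q0_def by (simp add: field_simps)
    thus ?thesis using qq nz by linarith
  qed
  have PQ: "P0 * Q0 = (a*b/n)\<^sup>2" using a0 n0 an unfolding P0_def Q0_def
    by (simp add: field_simps power2_eq_square)
  have "inner y' y' * inner z' z' \<le> P0 * Q0"
    by (rule mult_mono[OF p_le q_le]) (use p_le inner_ge_zero[of z'] inner_ge_zero[of y'] in linarith)+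
  hence "norm y' * norm z' \<le> a*b/n"
  proof -
    assume h: "inner y' y' * inner z' z' \<le> P0 * Q0"
    have "(norm y' * norm z')\<^sup>2 = inner y' y' * inner z' z'"
      by (simp add: power_mult_distrib power2_norm_eq_inner)
    hence "(norm y' * norm z')\<^sup>2 \<le> (a*b/n)\<^sup>2" using h PQ by simp
    moreover have "0 \<le> a*b/n" using a_ge b_ge n0 by simp
    ultimately show ?thesis by (rule power2_le_imp_le)
  qed
  moreover have "- (norm y' * norm z') \<le> inner y' z'"
    using Cauchy_Schwarz_ineq2[of y' z'] by linarith
  ultimately show ?thesis using yz by linarith
qed

lemma cone_dual_lr:
  fixes e z :: "'a::real_inner"
  assumes W: "subspace W" "e \<in> W" "z \<in> W"
    and ne: "inner e e = n" and a0: "0<\<alpha>" and an: "\<alpha>\<^sup>2 < n"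
    and H: "\<forall>y\<in>W. \<alpha> * norm y \<le> inner e y \<longrightarrow> 0 \<le> inner y z"
  shows "sqrt(n-\<alpha>\<^sup>2) * norm z \<le> inner e z"
proof -
  define b where "b = inner e z"
  define \<beta> where "\<beta> = sqrt(n-\<alpha>\<^sup>2)"
  have n0: "n > 0" using an a0 by (smt (verit) zero_less_power)
  have b2: "\<beta>\<^sup>2 = n - \<alpha>\<^sup>2" using an by (simp add: \<beta>_def)
  have bpos: "\<beta> > 0" using an by (simp add: \<beta>_def)
  have normsq: "\<And>x::'a. (norm x)\<^sup>2 = inner x x" by (simp add: power2_norm_eq_inner)
  have bsl: "\<beta> < sqrt n" using an a0 unfolding \<beta>_def by simp
  have ne': "norm e = sqrt n" using ne by (simp add: norm_eq_sqrt_inner)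
  have "\<alpha> * norm e \<le> inner e e"
  proof -
    have "\<alpha> < sqrt n" using an a0 by (simp add: real_less_rsqrt)
    hence "\<alpha> * sqrt n \<le> sqrt n * sqrt n" using n0 by (intro mult_right_mono) auto
    thus ?thesis using ne' ne n0 by simp
  qed
  hence b_ge: "b \<ge> 0" using H W(2) unfolding b_def by (simp add: inner_commute)
  define w where "w = z - (b/n) *\<^sub>R e"
  define q where "q = inner w w"
  have wW: "w \<in> W" unfolding w_def using W by (simp add: subspace_diff subspace_scale)
  have ew: "inner e w = 0" using n0 unfolding w_def b_def by (simp add: inner_diff_right ne)
  have wz: "inner w z = q" unfolding q_def w_def b_def using n0
    by (simp add: inner_diff_left inner_diff_right ne inner_commute field_simps)
  have zz: "inner z z = q + b\<^sup>2/n" unfolding q_def w_def b_def using n0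
    by (simp add: inner_diff_left inner_diff_right ne inner_commute field_simps power2_eq_square)
  have q0: "q \<ge> 0" unfolding q_def by simp
  have key: "\<beta>\<^sup>2 * q \<le> b\<^sup>2 * \<alpha>\<^sup>2 / n"
  proof (cases "q = 0")
    case True thus ?thesis using n0 by simp
  next
    case False
    hence qpos: "q > 0" using q0 by simp
    define t where "t = \<alpha> * sqrt q / (sqrt n * \<beta>)"
    have tpos: "t > 0" unfolding t_def using qpos a0 bpos n0 by simp
    have t2: "t\<^sup>2 * n * \<beta>\<^sup>2 = \<alpha>\<^sup>2 * q" unfolding t_def using qpos n0 bpos
      by (simp add: field_simps power_mult_distrib)
    define y where "y = t *\<^sub>R e - w"
    have yW: "y \<in> W" unfolding y_def using W wW by (simp add: subspace_diff subspace_scale)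
    have ey: "inner e y = t * n" unfolding y_def by (simp add: inner_diff_right ew ne)
    have yy: "inner y y = t\<^sup>2 * n + q" unfolding y_def q_def
      by (simp add: inner_diff_left inner_diff_right ew ne inner_commute power2_eq_square)
    have "(\<alpha> * norm y)\<^sup>2 = (t*n)\<^sup>2"
    proof -
      have "(\<alpha> * norm y)\<^sup>2 = \<alpha>\<^sup>2 * (t\<^sup>2 * n + q)" by (simp add: power_mult_distrib normsq yy)
      also have "\<dots> = \<alpha>\<^sup>2 * t\<^sup>2 * n + t\<^sup>2 * n * \<beta>\<^sup>2" using t2 by (simp add: algebra_simps)
      also have "\<dots> = (t*n)\<^sup>2" unfolding b2 by (simp add: algebra_simps power2_eq_square)
      finally show ?thesis .
    qed
    hence "\<alpha> * norm y \<le> inner e y" unfolding ey using a0 tpos n0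
      by (metis abs_of_nonneg mult_nonneg_nonneg norm_ge_zero less_imp_le order_refl real_sqrt_abs)
    hence "0 \<le> inner y z" using H yW by blast
    moreover have "inner y z = t * b - q" unfolding y_def b_def using wz by (simp add: inner_diff_left)
    ultimately have tb: "q \<le> t * b" by simp
    hence "q\<^sup>2 \<le> (t*b)\<^sup>2" using q0 by (intro power_mono) auto
    hence "q * q * (n * \<beta>\<^sup>2) \<le> t\<^sup>2 * n * \<beta>\<^sup>2 * b\<^sup>2"
      using n0 bpos by (simp add: power2_eq_square algebra_simps mult_right_mono)
    hence "q * (q * (n * \<beta>\<^sup>2)) \<le> q * (\<alpha>\<^sup>2 * b\<^sup>2)" unfolding t2 by (simp add: algebra_simps)
    hence "q * (n * \<beta>\<^sup>2) \<le> \<alpha>\<^sup>2 * b\<^sup>2" using qpos by simp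
    thus ?thesis using n0 by (simp add: field_simps)
  qed
  have "(\<beta> * norm z)\<^sup>2 \<le> b\<^sup>2"
  proof -
    have "(\<beta> * norm z)\<^sup>2 = \<beta>\<^sup>2 * q + \<beta>\<^sup>2 * b\<^sup>2 / n" by (simp add: power_mult_distrib normsq zz algebra_simps)
    also have "\<dots> \<le> b\<^sup>2 * \<alpha>\<^sup>2 / n + \<beta>\<^sup>2 * b\<^sup>2 / n" using key by simp
    also have "\<dots> = b\<^sup>2" unfolding b2 using n0 by (simp add: field_simps)
    finally show ?thesis .
  qed
  hence "\<beta> * norm z \<le> b" using b_ge by (rule power2_le_imp_le)
  thus ?thesis unfolding \<beta>_def b_def .
qed



lemma sym_inner:
  fixes M :: "real^'n^'n"
  assumes "transpose M = M"
  shows "inner x (M *v y) = inner y (M *v x)"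
proof -
  have "inner x (M *v y) = inner (x v* M) y" by (simp add: dot_lmul_matrix)
  also have "x v* M = transpose M *v x" by simp
  finally show ?thesis using assms by (simp add: inner_commute)
qed

lemma quad_expand:
  fixes M :: "real^'n^'n"
  assumes "transpose M = M"
  shows "inner (x + t *\<^sub>R y) (M *v (x + t *\<^sub>R y)) =
    inner x (M *v x) + 2*t*inner x (M *v y) + t\<^sup>2 * inner y (M *v y)"
  using sym_inner[OF assms, of y x]
  by (simp add: algebra_simps inner_add_left inner_add_right power2_eq_square)

lemma psd_cs:
  fixes M :: "real^'n^'n"
  assumes s: "transpose M = M" and p: "\<forall>x. 0 \<le> inner x (M *v x)"
  shows "(inner x (M *v y))\<^sup>2 \<le> inner x (M *v x) * inner y (M *v y)"
proof -
  define B where "B = inner x (M *v y)"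
  define Qx where "Qx = inner x (M *v x)"
  define Qy where "Qy = inner y (M *v y)"
  have H: "\<And>t. 0 \<le> Qx + 2*t*B + t\<^sup>2*Qy"
    using p quad_expand[OF s] unfolding B_def Qx_def Qy_def by metis
  have qy: "Qy \<ge> 0" using p unfolding Qy_def by blast
  show ?thesis
  proof (cases "Qy = 0")
    case True
    have "B = 0"
    proof (rule ccontr)
      assume "B \<noteq> 0"
      have "0 \<le> Qx + 2*(-(Qx+1)/(2*B))*B" using H[of "-(Qx+1)/(2*B)"] True by simp
      also have "\<dots> = -1" using \<open>B \<noteq> 0\<close> by (simp add: field_simps)
      finally show False by simp
    qed
    thus ?thesis using True unfolding B_def Qx_def Qy_def by simp
  next
    case False
    hence qp: "Qy > 0" using qy by simp
    have "0 \<le> Qx + 2*(-B/Qy)*B + (-B/Qy)\<^sup>2*Qy" by (rule H)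
    also have "\<dots> = (Qx*Qy - B\<^sup>2)/Qy" using qp by (simp add: field_simps power2_eq_square)
    finally have "0 \<le> Qx*Qy - B\<^sup>2" using qp by (simp add: divide_nonneg_pos zero_le_divide_iff)
    thus ?thesis unfolding B_def Qx_def Qy_def by simp
  qed
qed

lemma entry_inner: "(M::real^'n^'n) $ i $ j = inner (axis i 1) (M *v axis j 1)"
  by (simp add: inner_axis' matrix_vector_mult_basis column_def)

definition outer :: "real^'n \<Rightarrow> real^'n^'n" where
  "outer v = (\<chi> i j. v$i * v$j)"

lemma outer_mult: "outer v *v x = (inner v x) *\<^sub>R v"
  by (simp add: outer_def matrix_vector_mult_def vec_eq_iff inner_vec_def sum_distrib_left
      sum_distrib_right algebra_simps)

lemma outer_transpose: "transpose (outer v) = outer v"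
  by (simp add: outer_def transpose_def vec_eq_iff mult.commute)

lemma outer_scale: "outer (a *\<^sub>R v) = (a*a) *\<^sub>R outer v"
  by (simp add: outer_def vec_eq_iff)

lemma outer_zero: "outer 0 = 0"
  by (simp add: outer_def vec_eq_iff)

lemma psd_decomp_aux:
  fixes I :: "'n::finite set"
  assumes "finite I"
  shows "\<forall>M::real^'n^'n. transpose M = M \<and> (\<forall>x. 0 \<le> inner x (M *v x)) \<and> (\<forall>i j. i \<notin> I \<longrightarrow> M$i$j = 0)
     \<longrightarrow> (\<exists>v. M = (\<Sum>k\<in>I. outer (v k)))"
  using assms
proof (induction I rule: finite_induct)
  case empty
  show ?case
  proof (intro allI impI)
    fix M :: "real^'n^'n"
    assume "transpose M = M \<and> (\<forall>x. 0 \<le> inner x (M *v x)) \<and> (\<forall>i j. i \<notin> {} \<longrightarrow> M$i$j = 0)"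
    hence "M = 0" by (simp add: vec_eq_iff)
    thus "\<exists>v. M = (\<Sum>k\<in>{}. outer (v k))" by simp
  qed
next
  case (insert k I)
  show ?case
  proof (intro allI impI)
    fix M :: "real^'n^'n"
    assume A: "transpose M = M \<and> (\<forall>x. 0 \<le> inner x (M *v x)) \<and> (\<forall>i j. i \<notin> insert k I \<longrightarrow> M$i$j = 0)"
    hence s: "transpose M = M" and p: "\<forall>x. 0 \<le> inner x (M *v x)"
      and supp: "\<And>i j. i \<notin> insert k I \<Longrightarrow> M$i$j = 0" by auto
    have msym: "\<And>i j. M$i$j = M$j$i" using s by (metis transpose_def vec_lambda_beta)
    define c where "c = M$k$k"
    have c0: "c \<ge> 0" unfolding c_def entry_inner using p by blast
    show "\<exists>v. M = (\<Sum>k\<in>insert k I. outer (v k))"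
    proof (cases "c = 0")
      case True
      have rowk: "M$k$j = 0" for j
      proof -
        have "(M$k$j)\<^sup>2 \<le> c * M$j$j"
          using psd_cs[OF s p, of "axis k 1" "axis j 1"] unfolding c_def entry_inner .
        thus ?thesis using True by simp
      qed
      have "\<forall>i j. i \<notin> I \<longrightarrow> M$i$j = 0"
        using rowk supp by (metis insert_iff)
      then obtain v where v: "M = (\<Sum>k\<in>I. outer (v k))" using insert.IH s p by blast
      have "(\<Sum>j\<in>insert k I. outer ((v(k:=0)) j)) = (\<Sum>j\<in>I. outer (v j))"
        using insert.hyps by (simp add: outer_zero) (intro sum.cong, auto)
      thus ?thesis using v by metis
    next
      case False
      hence cp: "c > 0" using c0 by simp
      define u where "u = M *v axis k 1"
      have ui: "\<And>i. u$i = M$i$k" unfolding u_def by (simp add: matrix_vector_mult_basis column_def)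
      define N where "N = M - (1/c) *\<^sub>R outer u"
      have Ns: "transpose N = N" unfolding N_def using s outer_transpose[of u]
        by (simp add: vec_eq_iff transpose_def)
      have Np: "\<forall>x. 0 \<le> inner x (N *v x)"
      proof
        fix x
        have e: "inner x (N *v x) = inner x (M *v x) - (inner u x)\<^sup>2 / c"
          unfolding N_def by (simp add: matrix_vector_mult_diff_rdistrib scaleR_matrix_vector_assoc[symmetric] outer_mult
              inner_diff_right power2_eq_square inner_commute)
        have "(inner u x)\<^sup>2 \<le> inner x (M *v x) * c"
          using psd_cs[OF s p, of x "axis k 1"] unfolding c_def entry_inner u_def
          by (simp add: inner_commute)
        hence "(inner u x)\<^sup>2 / c \<le> inner x (M *v x)" using cp by (simp add: divide_le_eq)
        thus "0 \<le> inner x (N *v x)" using e by simp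
      qed
      have Nsupp: "\<forall>i j. i \<notin> I \<longrightarrow> N$i$j = 0"
      proof (intro allI impI)
        fix i j assume "i \<notin> I"
        show "N$i$j = 0"
        proof (cases "i = k")
          case True
          thus ?thesis unfolding N_def using cp by (simp add: outer_def ui c_def msym[of j k])
        next
          case False
          hence "M$i$j = 0" "M$i$k = 0" using supp \<open>i \<notin> I\<close> by auto
          thus ?thesis unfolding N_def by (simp add: outer_def ui)
        qed
      qed
      obtain v where v: "N = (\<Sum>k\<in>I. outer (v k))" using insert.IH Ns Np Nsupp by blast
      define v' where "v' = v(k := (1/sqrt c) *\<^sub>R u)"
      have "(\<Sum>j\<in>insert k I. outer (v' j)) = outer (v' k) + (\<Sum>j\<in>I. outer (v' j))"
        using insert.hyps by simp
      also have "(\<Sum>j\<in>I. outer (v' j)) = N" unfolding v v'_def using insert.hyps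
        by (intro sum.cong) auto
      also have "outer (v' k) = (1/c) *\<^sub>R outer u" unfolding v'_def using cp
        by (simp add: outer_scale real_sqrt_mult[symmetric])
      finally have "(\<Sum>j\<in>insert k I. outer (v' j)) = M" unfolding N_def by simp
      thus ?thesis by metis
    qed
  qed
qed

lemma psd_factor:
  fixes M :: "real^'n^'n"
  assumes "transpose M = M" "\<forall>x. 0 \<le> inner x (M *v x)"
  shows "\<exists>V::real^'n^'n. M = V ** transpose V"
proof -
  obtain v where v: "M = (\<Sum>k\<in>(UNIV::'n set). outer (v k))"
    using psd_decomp_aux[OF finite_class.finite_UNIV] assms by auto
  define V :: "real^'n^'n" where "V = (\<chi> i j. v j $ i)"
  have "V ** transpose V = M" unfolding v V_def
    by (simp add: vec_eq_iff matrix_matrix_mult_def transpose_def outer_def sum_component)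
  thus ?thesis by metis
qed



lemma inv_unique:
  fixes A B :: "real^'n^'n"
  assumes "A ** B = mat 1"
  shows "matrix_inv A = B"
proof -
  have BA: "B ** A = mat 1" using assms matrix_left_right_inverse by blast
  have "A ** matrix_inv A = mat 1 \<and> matrix_inv A ** A = mat 1"
    unfolding matrix_inv_def by (rule someI[of _ B]) (use assms BA in simp)
  hence "matrix_inv A ** A = mat 1" by simp
  hence "matrix_inv A ** (A ** B) = B" by (simp add: matrix_mul_assoc)
  thus ?thesis using assms by simp
qed

lemma trace_inner:
  fixes A B :: "real^'n^'n"
  assumes "transpose B = B"
  shows "trace (A ** B) = inner A B"
proof -
  have "\<And>i j. B$j$i = B$i$j" using assms by (metis transpose_def vec_lambda_beta)
  thus ?thesis by (simp add: trace_def matrix_matrix_mult_def inner_vec_def)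
qed

lemma trace_inner_one: "trace (A::real^'n^'n) = inner (mat 1) A"
proof -
  have "\<And>i. (\<Sum>j\<in>UNIV. (if i = j then 1 else 0) * A $ i $ j) = A$i$i"
  proof -
    fix i
    have "(\<Sum>j\<in>UNIV. (if i = j then 1 else 0) * A $ i $ j) = (\<Sum>j\<in>UNIV. if i = j then A $ i $ j else 0)"
      by (rule sum.cong) auto
    thus "(\<Sum>j\<in>UNIV. (if i = j then 1 else 0) * A $ i $ j) = A$i$i" by simp
  qed
  thus ?thesis by (simp add: trace_def inner_vec_def mat_def)
qed

lemma sym_subspace: "subspace {A::real^'n^'n. transpose A = A}"
  unfolding subspace_def by (simp add: vec_eq_iff transpose_def)

lemma trace_cyc: "trace ((A::real^'n^'n) ** B) = trace (B ** A)"
  by (rule trace_mul_sym)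

theorem lemma3p1:
  fixes E :: "real^'n^'n" and \<alpha> :: real
  assumes "pos_def E"
    and "0 < \<alpha>" and "\<alpha> < sqrt (real CARD('n))"
  shows "dual_cone (K_cone E \<alpha>) = K_cone (matrix_inv E) (sqrt (real CARD('n) - \<alpha>\<^sup>2))"
proof -
  define n where "n = real CARD('n)"
  have Es: "transpose E = E" and Ep: "\<And>x. x \<noteq> 0 \<Longrightarrow> 0 < inner x (E *v x)"
    using assms(1) unfolding pos_def_def sym_mat_def by auto
  have Epsd: "\<forall>x. 0 \<le> inner x (E *v x)"
    using Ep by (metis inner_zero_left order_refl less_imp_le)
  obtain V :: "real^'n^'n" where EV: "E = V ** transpose V" using psd_factor[OF Es Epsd] by blast
  have "\<forall>x. E *v x = 0 \<longrightarrow> x = 0" using Ep by (metis inner_zero_right less_irrefl)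
  hence "invertible E" using matrix_left_invertible_ker invertible_left_inverse by blast
  hence "det E \<noteq> 0" by (simp add: invertible_det_nz)
  hence "det V \<noteq> 0" unfolding EV by (simp add: det_mul)
  hence "invertible V" by (simp add: invertible_det_nz)
  then obtain U :: "real^'n^'n" where UV: "U ** V = mat 1" and VU: "V ** U = mat 1"
    using invertible_left_inverse matrix_left_right_inverse by blast
  have VtUt: "transpose V ** transpose U = mat 1"
    using UV by (metis matrix_transpose_mul transpose_mat)
  have UtVt: "transpose U ** transpose V = mat 1"
    using VU by (metis matrix_transpose_mul transpose_mat)
  define Ei where "Ei = transpose U ** U"
  have EEi: "E ** Ei = mat 1"
  proof -
    have "E ** Ei = V ** ((transpose V ** transpose U) ** U)" unfolding EV Ei_def by (simp add: matrix_mul_assoc)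
    also have "\<dots> = mat 1" using VtUt VU by simp
    finally show ?thesis .
  qed
  have invE: "matrix_inv E = Ei" by (rule inv_unique[OF EEi])
  have invEi: "matrix_inv Ei = E"
    by (rule inv_unique) (use EEi matrix_left_right_inverse in blast)
  define T where "T X = U ** X ** transpose U" for X :: "real^'n^'n"
  define R where "R S = transpose V ** S ** V" for S :: "real^'n^'n"
  have tr1: "trace (Ei ** X) = trace (T X)" for X
    unfolding Ei_def T_def using trace_cyc[of "transpose U" "U ** X"] by (simp add: matrix_mul_assoc)
  have tr2: "trace ((Ei ** X) ** (Ei ** X)) = trace (T X ** T X)" for X
    unfolding Ei_def T_def using trace_cyc[of "transpose U" "U ** X ** transpose U ** U ** X"]
    by (simp add: matrix_mul_assoc)
  have tr3: "trace (E ** S) = trace (R S)" for S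
    unfolding EV R_def using trace_cyc[of "V" "transpose V ** S"] by (simp add: matrix_mul_assoc)
  have tr4: "trace ((E ** S) ** (E ** S)) = trace (R S ** R S)" for S
    unfolding EV R_def using trace_cyc[of "V" "transpose V ** S ** V ** transpose V ** S"]
    by (simp add: matrix_mul_assoc)
  have tr5: "trace (X ** S) = trace (T X ** R S)" for X S
  proof -
    have "T X ** R S = U ** (X ** S ** V)"
      unfolding T_def R_def by (simp add: matrix_mul_assoc) (metis UtVt matrix_mul_assoc matrix_mul_rid)
    hence "trace (T X ** R S) = trace (X ** S ** V ** U)" using trace_cyc[of U "X ** S ** V"]
      by (simp add: matrix_mul_assoc)
    also have "\<dots> = trace (X ** S)" using VU by (simp add: matrix_mul_assoc[symmetric])
    finally show ?thesis by simp
  qed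
  have TV: "T (V ** Y ** transpose V) = Y" for Y
  proof -
    have "T (V ** Y ** transpose V) = (U ** V) ** Y ** (transpose V ** transpose U)"
      unfolding T_def by (simp add: matrix_mul_assoc)
    thus ?thesis using UV VtUt by simp
  qed
  have symT: "transpose X = X \<Longrightarrow> transpose (T X) = T X" for X
    unfolding T_def by (simp add: matrix_transpose_mul matrix_mul_assoc)
  have symVY: "transpose Y = Y \<Longrightarrow> transpose (V ** Y ** transpose V) = V ** Y ** transpose V" for Y
    by (simp add: matrix_transpose_mul matrix_mul_assoc)
  have symR: "transpose S = S \<Longrightarrow> transpose (R S) = R S" for S
    unfolding R_def by (simp add: matrix_transpose_mul matrix_mul_assoc)
  define W where "W = {A::real^'n^'n. transpose A = A}"
  have sW: "subspace W" unfolding W_def by (rule sym_subspace)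
  have eW: "mat 1 \<in> W" unfolding W_def by simp
  have ne: "inner (mat 1 :: real^'n^'n) (mat 1) = n"
  proof -
    have "trace (mat 1 :: real^'n^'n) = real CARD('n)" by (simp add: trace_I)
    thus ?thesis using trace_inner_one[of "mat 1 :: real^'n^'n"] unfolding n_def by simp
  qed
  have npos: "0 < n" unfolding n_def by simp
  have an: "\<alpha>\<^sup>2 < n"
  proof -
    have "\<alpha>\<^sup>2 < (sqrt n)\<^sup>2" using assms(2,3) unfolding n_def by (intro power_strict_mono) auto
    thus ?thesis using npos by simp
  qed
  have nrm: "transpose Y = Y \<Longrightarrow> sqrt (trace (Y ** Y)) = norm Y" for Y :: "real^'n^'n"
    by (simp add: trace_inner norm_eq_sqrt_inner)
  have mid: "(\<forall>X\<in>K_cone E \<alpha>. 0 \<le> trace (X ** S)) \<longleftrightarrow>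
      (\<forall>Y\<in>W. \<alpha> * norm Y \<le> inner (mat 1) Y \<longrightarrow> 0 \<le> inner Y (R S))" if sS: "transpose S = S" for S
  proof
    assume H: "\<forall>X\<in>K_cone E \<alpha>. 0 \<le> trace (X ** S)"
    show "\<forall>Y\<in>W. \<alpha> * norm Y \<le> inner (mat 1) Y \<longrightarrow> 0 \<le> inner Y (R S)"
    proof (intro ballI impI)
      fix Y assume YW: "Y \<in> W" and c: "\<alpha> * norm Y \<le> inner (mat 1) Y"
      define X where "X = V ** Y ** transpose V"
      have sY: "transpose Y = Y" using YW unfolding W_def by simp
      have TX: "T X = Y" unfolding X_def by (rule TV)
      have sX: "transpose X = X" unfolding X_def by (rule symVY[OF sY])
      have "X \<in> K_cone E \<alpha>"
        unfolding K_cone_def sym_mat_def invE tr1 tr2 TX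
        using sX c nrm[OF sY] trace_inner_one[of Y] by (simp add: TX)
      hence "0 \<le> trace (X ** S)" using H by blast
      thus "0 \<le> inner Y (R S)" using tr5[of X S] TX trace_inner[OF symR[OF sS], of Y] by simp
    qed
  next
    assume H: "\<forall>Y\<in>W. \<alpha> * norm Y \<le> inner (mat 1) Y \<longrightarrow> 0 \<le> inner Y (R S)"
    show "\<forall>X\<in>K_cone E \<alpha>. 0 \<le> trace (X ** S)"
    proof
      fix X assume "X \<in> K_cone E \<alpha>"
      hence sX: "transpose X = X" and c: "\<alpha> * sqrt (trace (T X ** T X)) \<le> trace (T X)"
        unfolding K_cone_def sym_mat_def invE tr1 tr2 by auto
      have YW: "T X \<in> W" unfolding W_def using symT[OF sX] by simp
      have "\<alpha> * norm (T X) \<le> inner (mat 1) (T X)"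
        using c nrm[OF symT[OF sX]] trace_inner_one[of "T X"] by simp
      hence "0 \<le> inner (T X) (R S)" using H YW by blast
      thus "0 \<le> trace (X ** S)" using tr5[of X S] trace_inner[OF symR[OF sS], of "T X"] by simp
    qed
  qed
  show ?thesis
  proof (rule set_eqI)
    fix S :: "real^'n^'n"
    show "S \<in> dual_cone (K_cone E \<alpha>) \<longleftrightarrow> S \<in> K_cone (matrix_inv E) (sqrt (real CARD('n) - \<alpha>\<^sup>2))"
    proof (cases "transpose S = S")
      case False thus ?thesis unfolding dual_cone_def K_cone_def sym_mat_def by simp
    next
      case True
      have RW: "R S \<in> W" unfolding W_def using symR[OF True] by simp
      have "S \<in> dual_cone (K_cone E \<alpha>) \<longleftrightarrow> (\<forall>Y\<in>W. \<alpha> * norm Y \<le> inner (mat 1) Y \<longrightarrow> 0 \<le> inner Y (R S))"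
        unfolding dual_cone_def sym_mat_def using True mid[OF True] by simp
      also have "\<dots> \<longleftrightarrow> sqrt(n-\<alpha>\<^sup>2) * norm (R S) \<le> inner (mat 1) (R S)"
        using cone_dual_lr[OF sW eW RW ne assms(2) an] cone_dual_rl[OF ne assms(2) an] by blast
      also have "\<dots> \<longleftrightarrow> S \<in> K_cone (matrix_inv E) (sqrt (real CARD('n) - \<alpha>\<^sup>2))"
        unfolding K_cone_def sym_mat_def invE invEi tr3 tr4 n_def
        using True nrm[OF symR[OF True]] trace_inner_one[of "R S"] by simp
      finally show ?thesis .
    qed
  qed
qed


end
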